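(* Let $X$ be a separated metric compact Hausdorff space with metric $d$. A binary continuous submetric $\gamma$ on $X$ is reflexive if and only if $d(x,y)\le\gamma((x,i),(y,j))$ for all $x,y\in X$ and $i,j\in\{0,1\}$.
   Context: A metric on a set $X$ is a map $d\colon X\times X\to[0,\infty]$ with $d(x,x)=0$ and $d(x,z)\le d(x,y)+d(y,z)$ (not necessarily symmetric, $\infty$ allowed); separated means $d(x,y)=0=d(y,x)$ implies $x=y$. A separated metric compact Hausdorff space is a compact Hausdorff space with a separated metric continuous $X\times X\to[0,\infty]$ for the upper topology on $[0,\infty]$ (open sets $]u,\infty]$); morphisms are continuous non-expansive maps. $X+X$ is the coproduct with elements $(x,i)$, $i\in\{0,1\}$, coproduct topology and metric $d((x,i),(y,i))=d(x,y)$, $d((x,i),(y,1-i))=\infty$. A binary continuous submetric on $X$ is a (not necessarily separated) metric $\gamma$ on $X+X$, continuous for the upper topology, below the coproduct metric. Its associated corelation is $\binom{q_0}{q_1}\colon X+X\to S:=(X+X)/{\sim_\gamma}$ where $u\sim_\gamma v$ iff $\gamma(u,v)=\gamma(v,u)=0$, $S$ has quotient topology and metric $([u],[v])\mapsto\gamma(u,v)$, $q_i(x)=[(x,i)]$. $\gamma$ is reflexive if there is a continuous non-expansive $e\colon S\to X$ with $e\circ q_0=e\circ q_1=1_X$. *)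

theory Defs
  imports "HOL-Analysis.Analysis"
begin

text \<open>Continuity of a [0,\<infinity>]-valued two-argument map for the upper topology on [0,\<infinity>]
  (open sets ]u,\<infinity>]): every set {(x,y). u < f x y} is open in T \<times> T.\<close>
definition upper_continuous2 :: "'a topology \<Rightarrow> ('a \<Rightarrow> 'a \<Rightarrow> ennreal) \<Rightarrow> bool" where
  "upper_continuous2 T f \<longleftrightarrow>
     (\<forall>u. openin (prod_topology T T) {p \<in> topspace T \<times> topspace T. u < f (fst p) (snd p)})"

definition is_metric_on :: "'a set \<Rightarrow> ('a \<Rightarrow> 'a \<Rightarrow> ennreal) \<Rightarrow> bool" where
  "is_metric_on A d \<longleftrightarrow> (\<forall>x\<in>A. d x x = 0) \<and> (\<forall>x\<in>A. \<forall>y\<in>A. \<forall>z\<in>A. d x z \<le> d x y + d y z)"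

definition separated_on :: "'a set \<Rightarrow> ('a \<Rightarrow> 'a \<Rightarrow> ennreal) \<Rightarrow> bool" where
  "separated_on A d \<longleftrightarrow> (\<forall>x\<in>A. \<forall>y\<in>A. d x y = 0 \<and> d y x = 0 \<longrightarrow> x = y)"

definition sep_metric_CH :: "'a topology \<Rightarrow> ('a \<Rightarrow> 'a \<Rightarrow> ennreal) \<Rightarrow> bool" where
  "sep_metric_CH X d \<longleftrightarrow> compact_space X \<and> Hausdorff_space X \<and>
     is_metric_on (topspace X) d \<and> separated_on (topspace X) d \<and> upper_continuous2 X d"

text \<open>The coproduct X+X: elements (i,x) with i \<in> {0,1}.\<close>
definition coprod2 :: "'a topology \<Rightarrow> (nat \<times> 'a) topology" where
  "coprod2 X = sum_topology (\<lambda>i. X) {0,1}"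

definition coprod_metric :: "('a \<Rightarrow> 'a \<Rightarrow> ennreal) \<Rightarrow> nat \<times> 'a \<Rightarrow> nat \<times> 'a \<Rightarrow> ennreal" where
  "coprod_metric d u v = (if fst u = fst v then d (snd u) (snd v) else \<infinity>)"

definition binary_cont_submetric ::
  "'a topology \<Rightarrow> ('a \<Rightarrow> 'a \<Rightarrow> ennreal) \<Rightarrow> (nat \<times> 'a \<Rightarrow> nat \<times> 'a \<Rightarrow> ennreal) \<Rightarrow> bool" where
  "binary_cont_submetric X d \<gamma> \<longleftrightarrow>
     is_metric_on (topspace (coprod2 X)) \<gamma> \<and> upper_continuous2 (coprod2 X) \<gamma> \<and>
     (\<forall>u\<in>topspace (coprod2 X). \<forall>v\<in>topspace (coprod2 X). \<gamma> u v \<le> coprod_metric d u v)"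

definition sim_rel :: "'b set \<Rightarrow> ('b \<Rightarrow> 'b \<Rightarrow> ennreal) \<Rightarrow> ('b \<times> 'b) set" where
  "sim_rel A \<gamma> = {(u,v). u \<in> A \<and> v \<in> A \<and> \<gamma> u v = 0 \<and> \<gamma> v u = 0}"

definition quotient_top :: "'b topology \<Rightarrow> ('b \<times> 'b) set \<Rightarrow> 'b set topology" where
  "quotient_top T R = topology (\<lambda>U. U \<subseteq> topspace T // R \<and> openin T (\<Union>U))"

lemma istopology_quotient_top:
  assumes "equiv (topspace T) R"
  shows "istopology (\<lambda>U. U \<subseteq> topspace T // R \<and> openin T (\<Union>U))"
proof -
  have "\<Union>(U \<inter> V) = \<Union>U \<inter> \<Union>V" if "U \<subseteq> topspace T // R" "V \<subseteq> topspace T // R" for U V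
  proof
    show "\<Union>U \<inter> \<Union>V \<subseteq> \<Union>(U \<inter> V)"
    proof
      fix x assume "x \<in> \<Union>U \<inter> \<Union>V"
      then obtain A B where AB: "A \<in> U" "B \<in> V" "x \<in> A" "x \<in> B" by blast
      have "A = B" using quotient_disj[OF assms] AB that by blast
      then show "x \<in> \<Union>(U \<inter> V)" using AB by blast
    qed
  qed blast
  moreover have "openin T (\<Union>(\<Union>K))" if "\<forall>U\<in>K. openin T (\<Union>U)" for K :: "'a set set set"
  proof -
    have "\<Union>(\<Union>K) = \<Union>(Union ` K)" by blast
    then show ?thesis using that by auto
  qed
  ultimately show ?thesis
    unfolding istopology_def by (auto intro!: openin_Int)
qed

lemma openin_quotient_top:
  assumes "equiv (topspace T) R"
  shows "openin (quotient_top T R) U \<longleftrightarrow> U \<subseteq> topspace T // R \<and> openin T (\<Union>U)"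
  unfolding quotient_top_def using topology_inverse'[OF istopology_quotient_top[OF assms]] by simp

definition corel_space :: "'a topology \<Rightarrow> (nat \<times> 'a \<Rightarrow> nat \<times> 'a \<Rightarrow> ennreal) \<Rightarrow> (nat \<times> 'a) set topology" where
  "corel_space X \<gamma> = quotient_top (coprod2 X) (sim_rel (topspace (coprod2 X)) \<gamma>)"

definition corel_class :: "'a topology \<Rightarrow> (nat \<times> 'a \<Rightarrow> nat \<times> 'a \<Rightarrow> ennreal) \<Rightarrow> nat \<times> 'a \<Rightarrow> (nat \<times> 'a) set" where
  "corel_class X \<gamma> u = sim_rel (topspace (coprod2 X)) \<gamma> `` {u}"

definition corel_q :: "'a topology \<Rightarrow> (nat \<times> 'a \<Rightarrow> nat \<times> 'a \<Rightarrow> ennreal) \<Rightarrow> nat \<Rightarrow> 'a \<Rightarrow> (nat \<times> 'a) set" where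
  "corel_q X \<gamma> i x = corel_class X \<gamma> (i, x)"

text \<open>\<gamma> is reflexive: there is a continuous non-expansive e : S \<rightarrow> X (S carrying the metric
  ([u],[v]) \<mapsto> \<gamma>(u,v)) with e \<circ> q_0 = e \<circ> q_1 = 1_X.\<close>
definition reflexive_submetric ::
  "'a topology \<Rightarrow> ('a \<Rightarrow> 'a \<Rightarrow> ennreal) \<Rightarrow> (nat \<times> 'a \<Rightarrow> nat \<times> 'a \<Rightarrow> ennreal) \<Rightarrow> bool" where
  "reflexive_submetric X d \<gamma> \<longleftrightarrow>
     (\<exists>e. continuous_map (corel_space X \<gamma>) X e \<and>
          (\<forall>u\<in>topspace (coprod2 X). \<forall>v\<in>topspace (coprod2 X).
              d (e (corel_class X \<gamma> u)) (e (corel_class X \<gamma> v)) \<le> \<gamma> u v) \<and>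
          (\<forall>x\<in>topspace X. e (corel_q X \<gamma> 0 x) = x \<and> e (corel_q X \<gamma> 1 x) = x))"

end

theory Submission
  imports Defs
begin

theorem lemma5p4:
  fixes X :: "'a topology" and d :: "'a \<Rightarrow> 'a \<Rightarrow> ennreal"
    and \<gamma> :: "nat \<times> 'a \<Rightarrow> nat \<times> 'a \<Rightarrow> ennreal"
  assumes "sep_metric_CH X d"
    and "binary_cont_submetric X d \<gamma>"
  shows "reflexive_submetric X d \<gamma> \<longleftrightarrow>
    (\<forall>x\<in>topspace X. \<forall>y\<in>topspace X. \<forall>i\<in>{0,1}. \<forall>j\<in>{0,1}. d x y \<le> \<gamma> (i, x) (j, y))"
proof -
  define T where "T = coprod2 X"
  define R where "R = sim_rel (topspace T) \<gamma>"
  have topT: "topspace T = {0,1} \<times> topspace X"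
    unfolding T_def coprod2_def by (auto simp: topspace_sum_topology)
  have met: "is_metric_on (topspace T) \<gamma>" using assms(2) unfolding binary_cont_submetric_def T_def by blast
  have sep: "separated_on (topspace X) d" using assms(1) unfolding sep_metric_CH_def by blast
  have eqv: "equiv (topspace T) R"
  proof (rule equivI)
    show "refl_on (topspace T) R" using met unfolding R_def sim_rel_def is_metric_on_def refl_on_def by auto
    show "sym R" unfolding R_def sim_rel_def sym_def by auto
    show "trans R" unfolding R_def sim_rel_def trans_def
    proof (clarify)
      fix a b c assume h: "a \<in> topspace T" "b \<in> topspace T" "\<gamma> a b = 0" "\<gamma> b a = 0"
        "c \<in> topspace T" "\<gamma> b c = 0" "\<gamma> c b = 0"
      have "\<gamma> a c \<le> \<gamma> a b + \<gamma> b c" "\<gamma> c a \<le> \<gamma> c b + \<gamma> b a"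
        using met h unfolding is_metric_on_def by blast+
      then show "\<gamma> a c = 0 \<and> \<gamma> c a = 0" using h by simp
    qed
    show "R \<subseteq> topspace T \<times> topspace T" unfolding R_def sim_rel_def by auto
  qed
  have topS: "topspace (corel_space X \<gamma>) = topspace T // R"
  proof -
    have "openin (corel_space X \<gamma>) (topspace T // R)"
      unfolding corel_space_def T_def[symmetric] R_def[symmetric] openin_quotient_top[OF eqv]
      using Union_quotient[OF eqv] by simp
    moreover have "U \<subseteq> topspace T // R" if "openin (corel_space X \<gamma>) U" for U
      using that unfolding corel_space_def T_def[symmetric] R_def[symmetric] openin_quotient_top[OF eqv] by simp
    ultimately show ?thesis using openin_subset openin_topspace by (intro subset_antisym) blast+
  qed
  show ?thesis
  proof
    assume "reflexive_submetric X d \<gamma>"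
    then obtain e where e: "\<forall>u\<in>topspace (coprod2 X). \<forall>v\<in>topspace (coprod2 X).
              d (e (corel_class X \<gamma> u)) (e (corel_class X \<gamma> v)) \<le> \<gamma> u v"
          "\<forall>x\<in>topspace X. e (corel_q X \<gamma> 0 x) = x \<and> e (corel_q X \<gamma> 1 x) = x"
      unfolding reflexive_submetric_def by blast
    have ei: "e (corel_class X \<gamma> (i,x)) = x" if "i \<in> {0,1}" "x \<in> topspace X" for i x
      using e(2) that unfolding corel_q_def by auto
    show "\<forall>x\<in>topspace X. \<forall>y\<in>topspace X. \<forall>i\<in>{0,1}. \<forall>j\<in>{0,1}. d x y \<le> \<gamma> (i, x) (j, y)"
    proof (intro ballI)
      fix x y i j assume h: "x \<in> topspace X" "y \<in> topspace X" "i \<in> {0::nat,1}" "j \<in> {0::nat,1}"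
      have "(i,x) \<in> topspace (coprod2 X)" "(j,y) \<in> topspace (coprod2 X)"
        using h topT T_def by auto
      then have "d (e (corel_class X \<gamma> (i,x))) (e (corel_class X \<gamma> (j,y))) \<le> \<gamma> (i,x) (j,y)"
        using e(1) by blast
      then show "d x y \<le> \<gamma> (i, x) (j, y)" using ei h by simp
    qed
  next
    assume H: "\<forall>x\<in>topspace X. \<forall>y\<in>topspace X. \<forall>i\<in>{0,1}. \<forall>j\<in>{0,1}. d x y \<le> \<gamma> (i, x) (j, y)"
    have H': "d (snd u) (snd v) \<le> \<gamma> u v" if "u \<in> topspace T" "v \<in> topspace T" for u v
    proof -
      obtain i x j y where "u = (i,x)" "v = (j,y)" by (cases u; cases v) auto
      then show ?thesis using H that topT by auto
    qed
    define e where "e C = snd (SOME u. u \<in> C)" for C :: "(nat \<times> 'a) set"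
    have sameR: "snd u = snd v" if "(u,v) \<in> R" for u v
    proof -
      have h: "u \<in> topspace T" "v \<in> topspace T" "\<gamma> u v = 0" "\<gamma> v u = 0"
        using that unfolding R_def sim_rel_def by auto
      have "d (snd u) (snd v) = 0" "d (snd v) (snd u) = 0" using H'[of u v] H'[of v u] h by auto
      moreover have "snd u \<in> topspace X" "snd v \<in> topspace X" using h(1,2) unfolding topT by (auto simp: mem_Times_iff)
      ultimately show ?thesis using sep unfolding separated_on_def by simp
    qed
    have ecl: "e (R `` {u}) = snd u" if "u \<in> topspace T" for u
    proof -
      have "u \<in> R `` {u}" by (rule equiv_class_self[OF eqv that])
      then have "(SOME v. v \<in> R `` {u}) \<in> R `` {u}" by (rule someI)
      then have "(u, SOME v. v \<in> R `` {u}) \<in> R" by simp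
      then show ?thesis unfolding e_def by (simp add: sameR)
    qed
    have cc: "corel_class X \<gamma> u = R `` {u}" for u
      unfolding corel_class_def R_def T_def by simp
    show "reflexive_submetric X d \<gamma>"
      unfolding reflexive_submetric_def
    proof (intro exI conjI ballI)
      show "continuous_map (corel_space X \<gamma>) X e"
        unfolding continuous_map_def topS
      proof (intro conjI allI impI)
        show "e \<in> topspace T // R \<rightarrow> topspace X"
          using ecl topT by (auto elim!: quotientE)
        fix U assume U: "openin X U"
        have un: "\<Union>{C \<in> topspace T // R. e C \<in> U} = {0,1} \<times> U"
        proof
          show "\<Union>{C \<in> topspace T // R. e C \<in> U} \<subseteq> {0,1} \<times> U"
          proof clarify
            fix a b C assume "(a,b) \<in> C" "C \<in> topspace T // R" "e C \<in> U"
            then obtain u where u: "u \<in> topspace T" "C = R `` {u}" by (auto elim!: quotientE)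
            then have "(u,(a,b)) \<in> R" using \<open>(a,b) \<in> C\<close> by simp
            then have "snd u = b" "(a,b) \<in> topspace T" using sameR[of u "(a,b)"] unfolding R_def sim_rel_def by auto
            then show "a \<in> {0,1} \<and> b \<in> U" using ecl u \<open>e C \<in> U\<close> topT by auto
          qed
          show "{0,1} \<times> U \<subseteq> \<Union>{C \<in> topspace T // R. e C \<in> U}"
          proof clarify
            fix a b assume ab: "a \<in> {0::nat,1}" "b \<in> U"
            then have abT: "(a,b) \<in> topspace T" using topT openin_subset[OF U] by auto
            then have "R `` {(a,b)} \<in> topspace T // R" by (rule quotientI)
            moreover have "(a,b) \<in> R `` {(a,b)}" by (rule equiv_class_self[OF eqv abT])
            moreover have "e (R `` {(a,b)}) \<in> U" using ecl abT ab by simp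
            ultimately show "(a,b) \<in> \<Union>{C \<in> topspace T // R. e C \<in> U}" by blast
          qed
        qed
        have "openin T ({0,1} \<times> U)"
          unfolding T_def coprod2_def openin_sum_topology
          using openin_subset[OF U] U by auto
        then show "openin (corel_space X \<gamma>) {x \<in> topspace T // R. e x \<in> U}"
          unfolding corel_space_def T_def[symmetric] R_def[symmetric] openin_quotient_top[OF eqv]
          using un by simp
      qed
    next
      fix u v assume "u \<in> topspace (coprod2 X)" "v \<in> topspace (coprod2 X)"
      then show "d (e (corel_class X \<gamma> u)) (e (corel_class X \<gamma> v)) \<le> \<gamma> u v"
        using H' ecl cc T_def by simp
    next
      fix x assume "x \<in> topspace X"
      then have "(0,x) \<in> topspace T" "(1,x) \<in> topspace T" using topT by auto
      then show "e (corel_q X \<gamma> 0 x) = x" "e (corel_q X \<gamma> 1 x) = x"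
        unfolding corel_q_def cc using ecl by auto
    qed
  qed
qed

end
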